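(* Let $N\ge3$ and $G\in\mathcal G_3(N)$. If $s=(x^1,\dots,x^{N-1},u,N)\in S^N\cap S_{nc}$ satisfies $c(G|s)=1$ (and hence has the sure-capture property), then: (1) $|N(u)|=1$, i.e. $u$ is a leaf of $G$; and (2) if $N(u)=\{v\}$, then $c(G|s')=\infty$ for every state $s'=(y^1,\dots,y^{N-1},v,N)\in S^N\cap S_{nc}$.
   Context: Board and moves: $G=(V,E)$ finite, simple, connected, undirected; $N(u)$ is the open neighbourhood of $u$. There are $N\ge3$ tokens, cops $C_1,\dots,C_{N-1}$ (tokens $1,\dots,N-1$) and robber $R$ (token $N$). A state is $s=(x^1,\dots,x^N,n)$ with $x^i\in V$ the position of token $i$ and $n$ the token to move; $S^n$ is the set of states with token $n$ to move; $s$ is a capture state if $x^i=x^N$ for some $i\le N-1$, and $S_{nc}$ is the set of noncapture states. In each turn the token to move moves to a vertex of its closed neighbourhood (may stay put); order $C_1,\dots,C_{N-1},R,C_1,\dots$; the game ends at the first capture. The modified cops-and-robber (CR) game is the two-player zero-sum game where one player controls all cops, the other the robber, and if capture occurs at time $t$ (number of turns) the robber's payoff is $-\gamma^t$ ($0$ if never), $\gamma\in(0,1)$. $\widehat\Sigma^n$ denotes the set of pure positional strategies of token $n$ that are components of optimal strategies in this game (CR-optimal strategies). For $s\in S_{nc}$, whenever CR-optimal play from $s$ leads to capture, it is always the same cop, denoted $\widehat C(s)$, that effects it. State cop number. For $s\in S_{nc}$, $c(G|s)=c_N(G|s)$ is the minimum $k\in\{1,\dots,N-1\}$ for which there exist $k$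 cops and strategies for them such that, starting from $s$, a capture (by any cop) occurs whatever the other $N-k$ tokens (including $R$) do; $c(G|s)=\infty$ if no such $k$ exists. $c(G)$ is the classical cop number of $G$. Graph classes. $\mathcal G(N)=\{G: c(G)>N-1\}$; $\mathcal G_1(N)=\{G\in\mathcal G(N):\exists s\in S_{nc}\text{ with } c(G|s)\in\{2,\dots,N-1\}\}$; $\mathcal G_1'(N)=\mathcal G(N)\setminus\mathcal G_1(N)$; $\mathcal G_2(N)=\{G\in\mathcal G(N): c(G|s)=\infty\text{ for all } s\in S^N\cap S_{nc}\}$; $\mathcal G_2'(N)=\mathcal G_1'(N)\setminus\mathcal G_2(N)$. Say that a state $s\in S_{nc}$ with $c(G|s)=1$ and $\widehat C(s)=C_m$ has the sure-capture property if for every $\widehat\sigma^m\in\widehat\Sigma^m$ and every strategy profile $\sigma^{-m}$ of the other tokens, play from $s$ under $(\widehat\sigma^m,\sigma^{-m})$ ends in a capture in which $C_m$ is on the robber's vertex. $\mathcal G_3(N)$ is the set of $G\in\mathcal G_2'(N)$ in which every $s\in S_{nc}$ with $c(G|s)=1$ has the sure-capture property. *)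

theory Defs
  imports Complex_Main "HOL-Library.Extended_Nat"
begin

definition graph :: "'v set \<Rightarrow> ('v \<Rightarrow> 'v \<Rightarrow> bool) \<Rightarrow> bool" where
  "graph V E \<longleftrightarrow> finite V \<and> V \<noteq> {} \<and>
     (\<forall>u v. E u v \<longrightarrow> u \<in> V \<and> v \<in> V \<and> u \<noteq> v \<and> E v u) \<and>
     (\<forall>u\<in>V. \<forall>v\<in>V. E\<^sup>*\<^sup>* u v)"

definition nbhd :: "'v set \<Rightarrow> ('v \<Rightarrow> 'v \<Rightarrow> bool) \<Rightarrow> 'v \<Rightarrow> 'v set" where
  "nbhd V E u = {w \<in> V. E u w}"

definition cnbhd :: "'v set \<Rightarrow> ('v \<Rightarrow> 'v \<Rightarrow> bool) \<Rightarrow> 'v \<Rightarrow> 'v set" where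
  "cnbhd V E u = insert u (nbhd V E u)"

text \<open>Even
  half-steps t are cop turns, odd ones robber turns.\<close>
definition cops_win :: "'v set \<Rightarrow> ('v \<Rightarrow> 'v \<Rightarrow> bool) \<Rightarrow> nat \<Rightarrow> bool" where
  "cops_win V E k \<longleftrightarrow>
    (\<exists>c0 f. length c0 = k \<and> set c0 \<subseteq> V \<and>
       (\<forall>cs r. length cs = k \<and> set cs \<subseteq> V \<and> r \<in> V \<longrightarrow>
           list_all2 (\<lambda>a b. b \<in> cnbhd V E a) cs (f (cs, r))) \<and>
       (\<forall>r0\<in>V. \<forall>q :: nat \<Rightarrow> 'v list \<times> 'v.
          q 0 = (c0, r0) \<and>
          (\<forall>t. even t \<longrightarrow> q (Suc t) = (f (q t), snd (q t))) \<and>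
          (\<forall>t. odd t \<longrightarrow> fst (q (Suc t)) = fst (q t) \<and> snd (q (Suc t)) \<in> cnbhd V E (snd (q t)))
          \<longrightarrow> (\<exists>t. snd (q t) \<in> set (fst (q t)))))"

definition cop_number :: "'v set \<Rightarrow> ('v \<Rightarrow> 'v \<Rightarrow> bool) \<Rightarrow> nat" where
  "cop_number V E = (LEAST k. 1 \<le> k \<and> cops_win V E k)"

text \<open>A state is a pair (xs, n): xs ! (i - 1) is the position of token i
  (tokens 1..N-1 are the cops, token N the robber), n is the token to move.\<close>
type_synonym 'v state = "'v list \<times> nat"

definition pos :: "'v state \<Rightarrow> nat \<Rightarrow> 'v" where
  "pos s i = fst s ! (i - 1)"

definition tok :: "'v state \<Rightarrow> nat" where
  "tok s = snd s"

definition valid_state :: "'v set \<Rightarrow> nat \<Rightarrow> 'v state \<Rightarrow> bool" where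
  "valid_state V N s \<longleftrightarrow> length (fst s) = N \<and> set (fst s) \<subseteq> V \<and> tok s \<in> {1..N}"

definition capture :: "nat \<Rightarrow> 'v state \<Rightarrow> bool" where
  "capture N s \<longleftrightarrow> (\<exists>i\<in>{1..N-1}. pos s i = pos s N)"

definition next_tok :: "nat \<Rightarrow> nat \<Rightarrow> nat" where
  "next_tok N n = (if n = N then 1 else n + 1)"

definition move :: "nat \<Rightarrow> 'v state \<Rightarrow> 'v \<Rightarrow> 'v state" where
  "move N s w = ((fst s)[tok s - 1 := w], next_tok N (tok s))"

text \<open>Arbitrary legal plays (sequences of states), which represent the outcomes of
  arbitrary (possibly history dependent) behaviour of the tokens.\<close>
definition legal_play :: "'v set \<Rightarrow> ('v \<Rightarrow> 'v \<Rightarrow> bool) \<Rightarrow> nat \<Rightarrow> (nat \<Rightarrow> 'v state) \<Rightarrow> bool" where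
  "legal_play V E N p \<longleftrightarrow> valid_state V N (p 0) \<and>
     (\<forall>t. \<exists>w\<in>cnbhd V E (pos (p t) (tok (p t))). p (Suc t) = move N (p t) w)"

type_synonym 'v strat = "'v state \<Rightarrow> 'v"

definition legal_strat :: "'v set \<Rightarrow> ('v \<Rightarrow> 'v \<Rightarrow> bool) \<Rightarrow> nat \<Rightarrow> nat \<Rightarrow> 'v strat \<Rightarrow> bool" where
  "legal_strat V E N i \<tau> \<longleftrightarrow>
     (\<forall>s. valid_state V N s \<and> tok s = i \<longrightarrow> \<tau> s \<in> cnbhd V E (pos s i))"

definition consistent :: "nat \<Rightarrow> nat \<Rightarrow> 'v strat \<Rightarrow> (nat \<Rightarrow> 'v state) \<Rightarrow> bool" where
  "consistent N i \<tau> p \<longleftrightarrow> (\<forall>t. tok (p t) = i \<longrightarrow> p (Suc t) = move N (p t) (\<tau> (p t)))"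

definition ends_in_capture_by :: "nat \<Rightarrow> (nat \<Rightarrow> 'v state) \<Rightarrow> nat \<Rightarrow> bool" where
  "ends_in_capture_by N p m \<longleftrightarrow>
     (\<exists>t. capture N (p t) \<and> (\<forall>t'<t. \<not> capture N (p t')) \<and> pos (p t) m = pos (p t) N)"

primrec prof_play :: "nat \<Rightarrow> (nat \<Rightarrow> 'v strat) \<Rightarrow> 'v state \<Rightarrow> nat \<Rightarrow> 'v state" where
  "prof_play N \<sigma> s 0 = s"
| "prof_play N \<sigma> s (Suc t) =
     move N (prof_play N \<sigma> s t) (\<sigma> (tok (prof_play N \<sigma> s t)) (prof_play N \<sigma> s t))"

definition payoff :: "real \<Rightarrow> nat \<Rightarrow> (nat \<Rightarrow> 'v strat) \<Rightarrow> 'v state \<Rightarrow> real" where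
  "payoff \<gamma> N \<sigma> s =
     (if \<exists>t. capture N (prof_play N \<sigma> s t)
      then - (\<gamma> ^ (LEAST t. capture N (prof_play N \<sigma> s t))) else 0)"

definition legal_profile :: "'v set \<Rightarrow> ('v \<Rightarrow> 'v \<Rightarrow> bool) \<Rightarrow> nat \<Rightarrow> (nat \<Rightarrow> 'v strat) \<Rightarrow> bool" where
  "legal_profile V E N \<sigma> \<longleftrightarrow> (\<forall>i\<in>{1..N}. legal_strat V E N i (\<sigma> i))"

text \<open>Optimal (saddle point) strategy pair of the two-player zero-sum game:
  the cops' player controls tokens 1..N-1 (minimiser), the robber token N
  (maximiser); optimality is required from every initial state.\<close>
definition optimal_profile ::
  "'v set \<Rightarrow> ('v \<Rightarrow> 'v \<Rightarrow> bool) \<Rightarrow> nat \<Rightarrow> real \<Rightarrow> (nat \<Rightarrow> 'v strat) \<Rightarrow> bool" where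
  "optimal_profile V E N \<gamma> \<sigma> \<longleftrightarrow> legal_profile V E N \<sigma> \<and>
     (\<forall>\<tau>. legal_strat V E N N \<tau> \<longrightarrow>
        (\<forall>s. valid_state V N s \<longrightarrow> payoff \<gamma> N (\<sigma>(N := \<tau>)) s \<le> payoff \<gamma> N \<sigma> s)) \<and>
     (\<forall>\<sigma>'. legal_profile V E N \<sigma>' \<and> \<sigma>' N = \<sigma> N \<longrightarrow>
        (\<forall>s. valid_state V N s \<longrightarrow> payoff \<gamma> N \<sigma> s \<le> payoff \<gamma> N \<sigma>' s))"

definition CR_optimal :: "'v set \<Rightarrow> ('v \<Rightarrow> 'v \<Rightarrow> bool) \<Rightarrow> nat \<Rightarrow> real \<Rightarrow> nat \<Rightarrow> 'v strat \<Rightarrow> bool" where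
  "CR_optimal V E N \<gamma> n \<tau> \<longleftrightarrow> (\<exists>\<sigma>. optimal_profile V E N \<gamma> \<sigma> \<and> \<sigma> n = \<tau>)"

definition CR_capturer :: "'v set \<Rightarrow> ('v \<Rightarrow> 'v \<Rightarrow> bool) \<Rightarrow> nat \<Rightarrow> real \<Rightarrow> 'v state \<Rightarrow> nat \<Rightarrow> bool" where
  "CR_capturer V E N \<gamma> s m \<longleftrightarrow> m \<in> {1..N-1} \<and>
     (\<exists>\<sigma>. optimal_profile V E N \<gamma> \<sigma> \<and> ends_in_capture_by N (prof_play N \<sigma> s) m)"

definition sure_capture :: "'v set \<Rightarrow> ('v \<Rightarrow> 'v \<Rightarrow> bool) \<Rightarrow> nat \<Rightarrow> real \<Rightarrow> 'v state \<Rightarrow> bool" where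
  "sure_capture V E N \<gamma> s \<longleftrightarrow>
     (\<exists>m. CR_capturer V E N \<gamma> s m \<and>
        (\<forall>\<tau>. CR_optimal V E N \<gamma> m \<tau> \<longrightarrow>
           (\<forall>p. legal_play V E N p \<and> p 0 = s \<and> consistent N m \<tau> p \<longrightarrow>
                ends_in_capture_by N p m)))"

definition forces_capture :: "'v set \<Rightarrow> ('v \<Rightarrow> 'v \<Rightarrow> bool) \<Rightarrow> nat \<Rightarrow> 'v state \<Rightarrow> nat \<Rightarrow> bool" where
  "forces_capture V E N s k \<longleftrightarrow>
     (\<exists>K \<tau>. K \<subseteq> {1..N-1} \<and> card K = k \<and> (\<forall>i\<in>K. legal_strat V E N i (\<tau> i)) \<and>
        (\<forall>p. legal_play V E N p \<and> p 0 = s \<and> (\<forall>i\<in>K. consistent N i (\<tau> i) p) \<longrightarrow>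
             (\<exists>t. capture N (p t))))"

definition state_cop_number :: "'v set \<Rightarrow> ('v \<Rightarrow> 'v \<Rightarrow> bool) \<Rightarrow> nat \<Rightarrow> 'v state \<Rightarrow> enat" where
  "state_cop_number V E N s =
     (if \<exists>k\<in>{1..N-1}. forces_capture V E N s k
      then enat (LEAST k. k \<in> {1..N-1} \<and> forces_capture V E N s k) else \<infinity>)"

definition noncapture_state :: "'v set \<Rightarrow> nat \<Rightarrow> 'v state \<Rightarrow> bool" where
  "noncapture_state V N s \<longleftrightarrow> valid_state V N s \<and> \<not> capture N s"

definition class_G :: "'v set \<Rightarrow> ('v \<Rightarrow> 'v \<Rightarrow> bool) \<Rightarrow> nat \<Rightarrow> bool" where
  "class_G V E N \<longleftrightarrow> cop_number V E > N - 1"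

definition class_G1 :: "'v set \<Rightarrow> ('v \<Rightarrow> 'v \<Rightarrow> bool) \<Rightarrow> nat \<Rightarrow> bool" where
  "class_G1 V E N \<longleftrightarrow> class_G V E N \<and>
     (\<exists>s. noncapture_state V N s \<and> (\<exists>k. 2 \<le> k \<and> k \<le> N - 1 \<and> state_cop_number V E N s = enat k))"

definition class_G1' :: "'v set \<Rightarrow> ('v \<Rightarrow> 'v \<Rightarrow> bool) \<Rightarrow> nat \<Rightarrow> bool" where
  "class_G1' V E N \<longleftrightarrow> class_G V E N \<and> \<not> class_G1 V E N"

definition class_G2 :: "'v set \<Rightarrow> ('v \<Rightarrow> 'v \<Rightarrow> bool) \<Rightarrow> nat \<Rightarrow> bool" where
  "class_G2 V E N \<longleftrightarrow> class_G V E N \<and>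
     (\<forall>s. noncapture_state V N s \<and> tok s = N \<longrightarrow> state_cop_number V E N s = \<infinity>)"

definition class_G2' :: "'v set \<Rightarrow> ('v \<Rightarrow> 'v \<Rightarrow> bool) \<Rightarrow> nat \<Rightarrow> bool" where
  "class_G2' V E N \<longleftrightarrow> class_G1' V E N \<and> \<not> class_G2 V E N"

definition class_G3 :: "'v set \<Rightarrow> ('v \<Rightarrow> 'v \<Rightarrow> bool) \<Rightarrow> nat \<Rightarrow> real \<Rightarrow> bool" where
  "class_G3 V E N \<gamma> \<longleftrightarrow> class_G2' V E N \<and>
     (\<forall>s. noncapture_state V N s \<and> state_cop_number V E N s = 1 \<longrightarrow> sure_capture V E N \<gamma> s)"

end

theory Submission
  imports Defs
begin


lemma tok_move[simp]: "tok (move N s w) = next_tok N (tok s)"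
  by (simp add: move_def tok_def)

lemma fst_move[simp]: "fst (move N s w) = (fst s)[tok s - 1 := w]"
  by (simp add: move_def tok_def)

lemma pos_move:
  assumes "length (fst z) = N" "tok z \<in> {1..N}" "i \<in> {1..N}"
  shows "pos (move N z w) i = (if i = tok z then w else pos z i)"
  using assms by (auto simp: pos_def nth_list_update)

lemma valid_move:
  assumes "valid_state V N z" "w \<in> cnbhd V E (pos z (tok z))"
  shows "valid_state V N (move N z w)"
proof -
  have pz: "pos z (tok z) \<in> V" using assms(1)
    by (auto simp: valid_state_def pos_def)
  have "w \<in> V" using assms(2) pz by (auto simp: cnbhd_def nbhd_def)
  moreover have "set ((fst z)[tok z - 1 := w]) \<subseteq> insert w (set (fst z))" by (rule set_update_subset_insert)
  ultimately show ?thesis using assms(1)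
    by (auto simp: valid_state_def next_tok_def)
qed

primrec ip :: "nat \<Rightarrow> 'v strat \<Rightarrow> 'v state \<Rightarrow> nat \<Rightarrow> 'v state" where
  "ip N f s 0 = s"
| "ip N f s (Suc n) = move N (ip N f s n) (f (ip N f s n))"

lemma ip_valid:
  assumes "valid_state V N s" "\<And>z. valid_state V N z \<Longrightarrow> f z \<in> cnbhd V E (pos z (tok z))"
  shows "valid_state V N (ip N f s n)"
  by (induction n) (auto intro: valid_move assms)

lemma ip_legal:
  assumes "valid_state V N s" "\<And>z. valid_state V N z \<Longrightarrow> f z \<in> cnbhd V E (pos z (tok z))"
  shows "legal_play V E N (ip N f s)"
  unfolding legal_play_def
proof (intro conjI allI)
  fix t show "\<exists>w\<in>cnbhd V E (pos (ip N f s t) (tok (ip N f s t))). ip N f s (Suc t) = move N (ip N f s t) w"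
    using assms(2)[OF ip_valid[OF assms]] by auto
qed (use assms in auto)

lemma ip_consistent:
  assumes "\<And>z. tok z = i \<Longrightarrow> f z = \<tau> z"
  shows "consistent N i \<tau> (ip N f s)"
  unfolding consistent_def using assms by auto

lemma legal_valid:
  assumes "legal_play V E N p" shows "valid_state V N (p t)"
proof (induction t)
  case 0 then show ?case using assms by (simp add: legal_play_def)
next
  case (Suc t)
  from assms obtain w where "w \<in> cnbhd V E (pos (p t) (tok (p t)))" "p (Suc t) = move N (p t) w"
    unfolding legal_play_def by blast
  then show ?case using valid_move Suc by metis
qed



definition ph :: "nat \<Rightarrow> nat \<Rightarrow> 'v list \<Rightarrow> 'v state \<Rightarrow> 'v state" where
  "ph N m ys z = (map (\<lambda>i. if i = m - 1 \<or> i = N - 1 then fst z ! i else ys ! i) [0..<N], snd z)"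

lemma tok_ph[simp]: "tok (ph N m ys z) = tok z"
  by (simp add: ph_def tok_def)

lemma pos_ph_m:
  assumes "1 \<le> m" "m \<le> N" shows "pos (ph N m ys z) m = pos z m"
  using assms by (simp add: ph_def pos_def)

lemma pos_ph_N:
  assumes "1 \<le> N" shows "pos (ph N m ys z) N = pos z N"
  using assms by (simp add: ph_def pos_def)

lemma ph_move_in:
  assumes "length (fst z) = N" "tok z = m \<or> tok z = N" "1 \<le> m" "m \<le> N"
  shows "ph N m ys (move N z w) = move N (ph N m ys z) w"
  using assms
  by (auto simp: ph_def move_def tok_def intro!: nth_equalityI simp: nth_list_update)

lemma ph_move_out:
  assumes "length (fst z) = N" "tok z \<in> {1..N}" "tok z \<noteq> m" "tok z \<noteq> N" "1 \<le> m" "m \<le> N"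
  shows "ph N m ys (move N z w) = move N (ph N m ys z) (pos (ph N m ys z) (tok z))"
  using assms
  by (auto simp: ph_def move_def tok_def pos_def intro!: nth_equalityI simp: nth_list_update)

lemma ph_valid:
  assumes "valid_state V N z" "length ys = N" "set ys \<subseteq> V"
  shows "valid_state V N (ph N m ys z)"
  using assms by (auto simp: ph_def valid_state_def tok_def)

lemma ph_id:
  assumes "length (fst z) = N" "length ys = N" "1 \<le> m" "m \<le> N"
    "pos z m = ys ! (m - 1)" "pos z N = ys ! (N - 1)"
  shows "ph N m ys z = (ys, snd z)"
  using assms by (auto simp: ph_def pos_def intro!: nth_equalityI)

lemma relocate:
  assumes m: "1 \<le> m" "m < N"
    and lt: "legal_strat V E N m \<tau>"
    and SC: "\<forall>p. legal_play V E N p \<and> p 0 = s \<and> consistent N m \<tau> p \<longrightarrow> ends_in_capture_by N p m"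
    and p0: "legal_play V E N p0" "p0 0 = s" "consistent N m \<tau> p0"
    and nc: "\<forall>n\<le>t0. \<not> capture N (p0 n)"
    and vs: "valid_state V N s'"
    and ag: "tok s' = tok (p0 t0)" "pos s' m = pos (p0 t0) m" "pos s' N = pos (p0 t0) N"
  shows "forces_capture V E N s' 1"
proof -
  define ys where "ys = fst (p0 t0)"
  have v0: "valid_state V N (p0 t0)" using legal_valid[OF p0(1)] .
  have ys: "length ys = N" "set ys \<subseteq> V" using v0 by (auto simp: ys_def valid_state_def)
  define \<tau>' where "\<tau>' = (\<lambda>z. \<tau> (ph N m ys z))"
  have lt': "legal_strat V E N m \<tau>'"
    unfolding legal_strat_def
  proof (intro allI impI)
    fix z assume z: "valid_state V N z \<and> tok z = m"
    have "valid_state V N (ph N m ys z)" using ph_valid[OF _ ys] z by blast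
    then have "\<tau> (ph N m ys z) \<in> cnbhd V E (pos (ph N m ys z) m)"
      using lt z tok_ph[of N m ys z] unfolding legal_strat_def by blast
    then show "\<tau>' z \<in> cnbhd V E (pos z m)" using pos_ph_m[of m N ys z] m by (simp add: \<tau>'_def)
  qed
  have win: "\<exists>t. capture N (q t)"
    if q: "legal_play V E N q" "q 0 = s'" "consistent N m \<tau>' q" for q
  proof -
    have vq: "\<And>k. valid_state V N (q k)" using legal_valid[OF q(1)] .
    have lq: "\<And>k. length (fst (q k)) = N" "\<And>k. tok (q k) \<in> {1..N}"
      using vq by (auto simp: valid_state_def)
    have q0: "ph N m ys (q 0) = p0 t0"
    proof -
      have "ph N m ys (q 0) = (ys, snd s')"
        using ph_id[of s' N ys m] vs ys m ag q(2)
        by (auto simp: valid_state_def ys_def pos_def)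
      then show ?thesis using ag(1) by (simp add: ys_def tok_def)
    qed
    define pp where "pp n = (if n < t0 then p0 n else ph N m ys (q (n - t0)))" for n
    have stepq: "\<exists>w\<in>cnbhd V E (pos (ph N m ys (q k)) (tok (ph N m ys (q k)))).
        ph N m ys (q (Suc k)) = move N (ph N m ys (q k)) w" for k
    proof -
      obtain w where w: "w \<in> cnbhd V E (pos (q k) (tok (q k)))" "q (Suc k) = move N (q k) w"
        using q(1) unfolding legal_play_def by blast
      show ?thesis
      proof (cases "tok (q k) = m \<or> tok (q k) = N")
        case True
        then have "pos (ph N m ys (q k)) (tok (q k)) = pos (q k) (tok (q k))"
          using pos_ph_m[of m N ys "q k"] pos_ph_N[of N m ys "q k"] m by (elim disjE) simp_all
        then show ?thesis using w True ph_move_in[OF lq(1) True] m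
          by (intro bexI[of _ w]) auto
      next
        case False
        then show ?thesis using w ph_move_out[OF lq(1) lq(2)] m
          by (intro bexI[of _ "pos (ph N m ys (q k)) (tok (q k))"]) (auto simp: cnbhd_def)
      qed
    qed
    have leg: "legal_play V E N pp"
      unfolding legal_play_def
    proof (intro conjI allI)
      show "valid_state V N (pp 0)" using legal_valid[OF p0(1), of 0] q0 by (simp add: pp_def)
    next
      fix t
      show "\<exists>w\<in>cnbhd V E (pos (pp t) (tok (pp t))). pp (Suc t) = move N (pp t) w"
      proof (cases "Suc t < t0")
        case True then show ?thesis using p0(1) unfolding legal_play_def pp_def by auto
      next
        case F: False
        show ?thesis
        proof (cases "Suc t = t0")
          case True then show ?thesis using p0(1) q0 unfolding legal_play_def pp_def by auto
        next
          case False
          with F have "t \<ge> t0" by simp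
          then have "pp t = ph N m ys (q (t - t0))" "pp (Suc t) = ph N m ys (q (Suc (t - t0)))"
            by (auto simp: pp_def Suc_diff_le)
          then show ?thesis using stepq by simp
        qed
      qed
    qed
    have con: "consistent N m \<tau> pp"
      unfolding consistent_def
    proof (intro allI impI)
      fix t assume tk: "tok (pp t) = m"
      show "pp (Suc t) = move N (pp t) (\<tau> (pp t))"
      proof (cases "Suc t < t0")
        case True then show ?thesis using p0(3) tk unfolding consistent_def pp_def by auto
      next
        case F: False
        show ?thesis
        proof (cases "Suc t = t0")
          case True then show ?thesis using p0(3) q0 tk unfolding consistent_def pp_def by auto
        next
          case False
          with F have ge: "t \<ge> t0" by simp
          then have e: "pp t = ph N m ys (q (t - t0))" "pp (Suc t) = ph N m ys (q (Suc (t - t0)))"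
            by (auto simp: pp_def Suc_diff_le)
          have tq: "tok (q (t - t0)) = m" using tk e by simp
          have "q (Suc (t - t0)) = move N (q (t - t0)) (\<tau>' (q (t - t0)))"
            using q(3) tq unfolding consistent_def by auto
          then show ?thesis using e ph_move_in[OF lq(1)] tq m by (simp add: \<tau>'_def)
        qed
      qed
    qed
    have pp0: "pp 0 = s" using p0(2) q0 by (simp add: pp_def)
    obtain t where t: "capture N (pp t)" "\<forall>t'<t. \<not> capture N (pp t')" "pos (pp t) m = pos (pp t) N"
      using SC leg pp0 con unfolding ends_in_capture_by_def by blast
    have "\<not> t < t0" using t(1) nc by (auto simp: pp_def)
    then have "pos (q (t - t0)) m = pos (q (t - t0)) N"
      using t(3) pos_ph_m[of m N ys "q (t - t0)"] pos_ph_N[of N m ys "q (t - t0)"] m by (simp add: pp_def)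
    then have "capture N (q (t - t0))" using m unfolding capture_def by force
    then show ?thesis by blast
  qed
  show ?thesis unfolding forces_capture_def
    apply (rule exI[of _ "{m}"], rule exI[of _ "\<lambda>_. \<tau>'"])
    using m lt' win by auto
qed



lemma scn_one:
  assumes "noncapture_state V N s'" "forces_capture V E N s' 1" "N \<ge> 2"
  shows "state_cop_number V E N s' = 1"
proof -
  have "(LEAST k. k \<in> {1..N-1} \<and> forces_capture V E N s' k) = 1"
    by (rule Least_equality) (use assms in auto)
  then show ?thesis using assms unfolding state_cop_number_def
    by (auto simp: one_enat_def)
qed

lemma tok_ip:
  assumes "tok s = N" "N \<ge> 2"
  shows "tok (ip N f s n) = (if n mod N = 0 then N else n mod N)"
proof (induction n)
  case 0 then show ?case using assms by simp
next
  case (Suc n)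
  have lt: "n mod N < N" using assms by simp
  show ?case
  proof (cases "n mod N = 0")
    case True then show ?thesis using Suc assms by (simp add: next_tok_def mod_Suc)
  next
    case False
    then have "tok (ip N f s n) = n mod N" "n mod N \<noteq> N" using Suc lt by auto
    then show ?thesis using False lt by (simp add: next_tok_def mod_Suc)
  qed
qed

lemma sure_capture_strat:
  assumes "sure_capture V E N \<gamma> s"
  obtains m \<tau> where "1 \<le> m" "m \<le> N - 1" "legal_strat V E N m \<tau>"
    "\<forall>p. legal_play V E N p \<and> p 0 = s \<and> consistent N m \<tau> p \<longrightarrow> ends_in_capture_by N p m"
proof -
  obtain m where m: "CR_capturer V E N \<gamma> s m"
    "\<forall>\<tau>. CR_optimal V E N \<gamma> m \<tau> \<longrightarrow>
           (\<forall>p. legal_play V E N p \<and> p 0 = s \<and> consistent N m \<tau> p \<longrightarrow> ends_in_capture_by N p m)"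
    using assms unfolding sure_capture_def by blast
  then obtain \<sigma> where \<sigma>: "optimal_profile V E N \<gamma> \<sigma>" "m \<in> {1..N-1}"
    unfolding CR_capturer_def by blast
  have "CR_optimal V E N \<gamma> m (\<sigma> m)" using \<sigma> unfolding CR_optimal_def by blast
  moreover have "legal_strat V E N m (\<sigma> m)" using \<sigma> unfolding optimal_profile_def legal_profile_def
    by auto
  ultimately show ?thesis using that m \<sigma> by auto
qed

lemma nbhd_sym:
  assumes "graph V E" "b \<in> nbhd V E a" shows "a \<in> nbhd V E b"
  using assms unfolding graph_def nbhd_def by blast

lemma leaf:
  assumes G: "graph V E" and N3: "N \<ge> 3" and G3: "class_G3 V E N \<gamma>"
    and nc: "noncapture_state V N s" and tk: "tok s = N" and sc: "state_cop_number V E N s = 1"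
  shows "\<exists>x. nbhd V E (pos s N) = {x}"
proof -
  have "sure_capture V E N \<gamma> s" using G3 nc sc unfolding class_G3_def by blast
  then obtain m \<tau> where m: "1 \<le> m" "m \<le> N - 1" and lt: "legal_strat V E N m \<tau>"
    and SC: "\<forall>p. legal_play V E N p \<and> p 0 = s \<and> consistent N m \<tau> p \<longrightarrow> ends_in_capture_by N p m"
    by (rule sure_capture_strat)
  have mN: "m < N" "m \<noteq> N" using m N3 by auto
  define u where "u = pos s N"
  define f where "f z = (if tok z = m then \<tau> z else pos z (tok z))" for z
  define p0 where "p0 = ip N f s"
  have vs: "valid_state V N s" using nc unfolding noncapture_state_def by blast
  have fok: "f z \<in> cnbhd V E (pos z (tok z))" if "valid_state V N z" for z
  proof (cases "tok z = m")
    case True then show ?thesis using lt that unfolding f_def legal_strat_def by metis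
  qed (simp add: f_def cnbhd_def)
  have leg: "legal_play V E N p0" unfolding p0_def by (rule ip_legal[OF vs fok])
  have con: "consistent N m \<tau> p0" unfolding p0_def by (rule ip_consistent) (simp add: f_def)
  have vp: "\<And>n. valid_state V N (p0 n)" using legal_valid[OF leg] .
  have lp: "\<And>n. length (fst (p0 n)) = N" "\<And>n. tok (p0 n) \<in> {1..N}"
    using vp by (auto simp: valid_state_def)
  have step: "p0 (Suc n) = move N (p0 n) (f (p0 n))" for n by (simp add: p0_def)
  have inv: "\<forall>i\<in>{1..N}. i \<noteq> m \<longrightarrow> pos (p0 n) i = pos s i" for n
  proof (induction n)
    case 0 then show ?case by (simp add: p0_def)
  next
    case (Suc n)
    show ?case
    proof (intro ballI impI)
      fix i assume i: "i \<in> {1..N}" "i \<noteq> m"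
      have "pos (p0 (Suc n)) i = (if i = tok (p0 n) then f (p0 n) else pos (p0 n) i)"
        using step pos_move[OF lp(1) lp(2) i(1)] by simp
      also have "\<dots> = pos (p0 n) i" using i by (auto simp: f_def)
      finally show "pos (p0 (Suc n)) i = pos s i" using Suc i by simp
    qed
  qed
  have N2: "N \<ge> 2" using N3 by simp
  have tkn: "tok (p0 n) = (if n mod N = 0 then N else n mod N)" for n
    unfolding p0_def by (rule tok_ip[OF tk N2])
  have posN: "pos (p0 n) N = u" for n using inv[of n] mN N2 by (simp add: u_def)
  have capm: "capture N z" if "pos z m = pos z N" for z
    using that m unfolding capture_def by force
  obtain t where t: "capture N (p0 t)" "\<forall>t'<t. \<not> capture N (p0 t')" "pos (p0 t) m = pos (p0 t) N"
    using SC leg con unfolding ends_in_capture_by_def p0_def by fastforce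
  have "t \<noteq> 0" using t(1) nc unfolding noncapture_state_def p0_def by (cases t) auto
  then obtain t1 where t1: "t = Suc t1" by (cases t) auto
  have ncap: "\<forall>n\<le>t1. \<not> capture N (p0 n)" using t(2) t1 by auto
  have ne: "pos (p0 t1) m \<noteq> u" using ncap capm[of "p0 t1"] posN[of t1] by auto
  have pm: "pos (p0 (Suc n)) m = (if tok (p0 n) = m then \<tau> (p0 n) else pos (p0 n) m)" for n
    using step pos_move[OF lp(1) lp(2), of m n "f (p0 n)"] m mN by (auto simp: f_def)
  have tk1: "tok (p0 t1) = m"
  proof (rule ccontr)
    assume "tok (p0 t1) \<noteq> m"
    then have "pos (p0 t) m = pos (p0 t1) m" using pm t1 by simp
    then show False using t(3) posN ne by simp
  qed
  define x where "x = pos (p0 t1) m"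
  have "u = \<tau> (p0 t1)" using pm[of t1] tk1 t(3) t1 posN by simp
  moreover have "\<tau> (p0 t1) \<in> cnbhd V E (pos (p0 t1) m)"
    using lt[unfolded legal_strat_def, rule_format, of "p0 t1"] vp[of t1] tk1 by blast
  ultimately have "u \<in> cnbhd V E x" unfolding x_def by simp
  moreover have "u \<noteq> x" using ne unfolding x_def by simp
  ultimately have "u \<in> nbhd V E x" unfolding cnbhd_def by simp
  then have xn: "x \<in> nbhd V E u" by (rule nbhd_sym[OF G])
  have "t1 mod N \<noteq> 0" using tkn[of t1] tk1 mN by (simp split: if_split_asm)
  then have t1m: "t1 mod N = m" using tkn[of t1] tk1 by auto
  define t0 where "t0 = N * (t1 div N)"
  have "N * (t1 div N) + t1 mod N = t1" by (rule mult_div_mod_eq)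
  then have t01: "t0 + m = t1" using t1m unfolding t0_def by simp
  have keep: "k \<le> m \<Longrightarrow> pos (p0 (t0 + k)) m = pos (p0 t0) m" for k
  proof (induction k)
    case 0 then show ?case by simp
  next
    case (Suc k)
    have "(t0 + k) mod N = k" using Suc.prems mN unfolding t0_def by simp
    then have "tok (p0 (t0 + k)) \<noteq> m" using tkn[of "t0 + k"] Suc.prems mN by auto
    then show ?case using pm[of "t0 + k"] Suc by simp
  qed
  have xt0: "x = pos (p0 t0) m" using keep[of m] t01 x_def by simp
  have tk0: "tok (p0 t0) = N" using tkn[of t0] unfolding t0_def by simp
  have nc0: "\<forall>n\<le>t0. \<not> capture N (p0 n)" using ncap t01 by auto
  have uV: "u \<in> V" "x \<in> V" using xn \<open>u \<in> nbhd V E x\<close> unfolding nbhd_def by auto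
  have xu: "x \<noteq> u" using ne x_def by simp
  have only: "b = x" if b: "b \<in> nbhd V E u" for b
  proof (rule ccontr)
    assume bx: "b \<noteq> x"
    have bV: "b \<in> V" and bu: "b \<noteq> u" using b G unfolding nbhd_def graph_def by auto
    define ss :: "'a state" where "ss = (map (\<lambda>i. if i = m - 1 then x else if i = N - 1 then u else b) [0..<N], N)"
    have pss: "pos ss i = (if i = m then x else if i = N then u else b)" if "i \<in> {1..N}" for i
      using that m mN unfolding ss_def pos_def by auto
    have tss: "tok ss = N" by (simp add: ss_def tok_def)
    have vss: "valid_state V N ss" using uV bV N2 unfolding ss_def valid_state_def tok_def by auto
    have ncss: "noncapture_state V N ss"
    proof -
      have "pos ss i \<noteq> pos ss N" if i: "i \<in> {1..N-1}" for i
      proof -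
        have "pos ss i = (if i = m then x else b)" using pss[of i] i N2 by auto
        moreover have "pos ss N = u" using pss[of N] N2 mN by auto
        ultimately show ?thesis using xu bu by auto
      qed
      then show ?thesis unfolding noncapture_state_def capture_def using vss by blast
    qed
    have "forces_capture V E N ss 1"
      by (rule relocate[OF _ mN(1) lt SC leg _ con nc0 vss]) 
         (use m tss tk0 pss xt0 posN mN N2 u_def in \<open>auto simp: p0_def\<close>)
    then have "state_cop_number V E N ss = 1" using scn_one ncss N2 by blast
    then have "sure_capture V E N \<gamma> ss" using G3 ncss unfolding class_G3_def by blast
    then obtain m' \<tau>' where m': "1 \<le> m'" "m' \<le> N - 1" and lt': "legal_strat V E N m' \<tau>'"
      and SC': "\<forall>p. legal_play V E N p \<and> p 0 = ss \<and> consistent N m' \<tau>' p \<longrightarrow> ends_in_capture_by N p m'"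
      by (rule sure_capture_strat)
    define w0 where "w0 = (if m' = m then b else x)"
    define g where "g z = (if tok z = m' then \<tau>' z else if z = ss then w0 else pos z (tok z))" for z
    define q where "q = ip N g ss"
    have gok: "g z \<in> cnbhd V E (pos z (tok z))" if "valid_state V N z" for z
    proof (cases "tok z = m'")
      case True then show ?thesis using lt' that unfolding g_def legal_strat_def by metis
    next
      case False then show ?thesis
        using b xn pss[of N] tss N2 unfolding g_def w0_def cnbhd_def by auto
    qed
    have legq: "legal_play V E N q" unfolding q_def by (rule ip_legal[OF vss gok])
    have conq: "consistent N m' \<tau>' q" unfolding q_def by (rule ip_consistent) (simp add: g_def)
    have m'N: "m' \<noteq> N" using m' N2 by auto
    have q1: "q 1 = move N ss w0" using tss m'N by (simp add: q_def g_def)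
    have lss: "length (fst ss) = N" "tok ss \<in> {1..N}" using vss by (auto simp: valid_state_def)
    have pq1: "pos (q 1) i = (if i = N then w0 else pos ss i)" if "i \<in> {1..N}" for i
      using q1 pos_move[OF lss that] tss by simp
    have cap1: "capture N (q 1)"
    proof (cases "m' = m")
      case True
      define i where "i = (if m = 1 then 2 else 1::nat)"
      have i: "i \<in> {1..N-1}" "i \<noteq> m" using N3 unfolding i_def by auto
      then have "pos (q 1) i = b" using pq1[of i] pss[of i] by auto
      moreover have "pos (q 1) N = b" using pq1[of N] True N2 by (simp add: w0_def)
      ultimately show ?thesis using i unfolding capture_def by auto
    next
      case False
      have "pos (q 1) m = x" using pq1[of m] pss[of m] m mN by auto
      moreover have "pos (q 1) N = x" using pq1[of N] False N2 by (simp add: w0_def)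
      ultimately show ?thesis using m unfolding capture_def by force
    qed
    obtain t' where t': "capture N (q t')" "\<forall>t''<t'. \<not> capture N (q t'')" "pos (q t') m' = pos (q t') N"
      using SC' legq conq unfolding ends_in_capture_by_def q_def by fastforce
    have "t' \<noteq> 0" using t'(1) ncss unfolding noncapture_state_def q_def by (cases t') auto
    moreover have "\<not> t' > 1" using t'(2) cap1 by auto
    ultimately have "t' = 1" by simp
    then have "pos (q 1) m' = w0" using t'(3) pq1[of N] N2 by simp
    moreover have "pos (q 1) m' = pos ss m'" using pq1[of m'] m' m'N by auto
    ultimately show False using pss[of m'] m' m'N bx unfolding w0_def by (auto split: if_splits)
  qed
  show ?thesis using xn only unfolding u_def by blast
qed

lemma two_vertex_copwin:
  assumes G: "graph V E" and u: "nbhd V E u = {v}" and v: "nbhd V E v = {u}" and uV: "u \<in> V"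
  shows "cops_win V E 1"
proof -
  have Vs: "V \<subseteq> {u, v}"
  proof
    fix w assume w: "w \<in> V"
    have "E\<^sup>*\<^sup>* u w" using G uV w unfolding graph_def by blast
    then show "w \<in> {u, v}"
    proof (induction rule: rtranclp_induct)
      case base then show ?case by simp
    next
      case (step y z)
      then have "z \<in> nbhd V E y" using G unfolding graph_def nbhd_def by blast
      then show ?case using step u v by auto
    qed
  qed
  have cn: "r \<in> cnbhd V E c" if "c \<in> V" "r \<in> V" for c r
    using that Vs u v unfolding cnbhd_def by auto
  show ?thesis unfolding cops_win_def
  proof (intro exI[of _ "[u]"] exI[of _ "\<lambda>(cs, r). [r]"] conjI allI impI ballI)
    show "length [u] = 1" "set [u] \<subseteq> V" using uV by auto
  next
    fix cs :: "'a list" and r assume h: "length cs = 1 \<and> set cs \<subseteq> V \<and> r \<in> V"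
    then obtain c where "cs = [c]" by (metis One_nat_def length_0_conv length_Suc_conv)
    then show "list_all2 (\<lambda>a b. b \<in> cnbhd V E a) cs ((\<lambda>(cs, r). [r]) (cs, r))"
      using h cn by auto
  next
    fix r0 and q :: "nat \<Rightarrow> 'a list \<times> 'a"
    assume h: "q 0 = ([u], r0) \<and>
       (\<forall>t. even t \<longrightarrow> q (Suc t) = ((\<lambda>(cs, r). [r]) (q t), snd (q t))) \<and>
       (\<forall>t. odd t \<longrightarrow> fst (q (Suc t)) = fst (q t) \<and> snd (q (Suc t)) \<in> cnbhd V E (snd (q t)))"
    then have "q 1 = ([r0], r0)" by (metis One_nat_def case_prod_conv even_zero snd_conv)
    then show "\<exists>t. snd (q t) \<in> set (fst (q t))" by (intro exI[of _ 1]) simp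
  qed
qed

theorem mainTheorem14:
  fixes V :: "'v set" and E :: "'v \<Rightarrow> 'v \<Rightarrow> bool" and N :: nat and \<gamma> :: real
    and s :: "'v state"
  assumes "graph V E" and "N \<ge> 3" and "0 < \<gamma>" and "\<gamma> < 1"
    and "class_G3 V E N \<gamma>"
    and "noncapture_state V N s" and "tok s = N"
    and "state_cop_number V E N s = 1"
  shows "card (nbhd V E (pos s N)) = 1 \<and>
         (\<forall>v. nbhd V E (pos s N) = {v} \<longrightarrow>
            (\<forall>s'. noncapture_state V N s' \<and> tok s' = N \<and> pos s' N = v \<longrightarrow>
                  state_cop_number V E N s' = \<infinity>))"
proof -
  note G = assms(1) and N3 = assms(2) and G3 = assms(5)
  obtain x where x: "nbhd V E (pos s N) = {x}" using leaf[OF G N3 G3 assms(6,7,8)] by blast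
  have cG: "class_G V E N" and nG1: "\<not> class_G1 V E N" using G3
    unfolding class_G3_def class_G2'_def class_G1'_def by auto
  have part2: "state_cop_number V E N s' = \<infinity>"
    if v: "nbhd V E (pos s N) = {v}" and s': "noncapture_state V N s'" "tok s' = N" "pos s' N = v" for v s'
  proof (rule ccontr)
    assume ni: "state_cop_number V E N s' \<noteq> \<infinity>"
    then have ex: "\<exists>k\<in>{1..N-1}. forces_capture V E N s' k" unfolding state_cop_number_def
      by (auto split: if_splits)
    define k0 where "k0 = (LEAST k. k \<in> {1..N-1} \<and> forces_capture V E N s' k)"
    have k0: "k0 \<in> {1..N-1}" using LeastI_ex[of "\<lambda>k. k \<in> {1..N-1} \<and> forces_capture V E N s' k"] ex
      unfolding k0_def by blast
    have scn: "state_cop_number V E N s' = enat k0" using ex unfolding state_cop_number_def k0_def by simp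
    have "k0 = 1"
    proof (rule ccontr)
      assume "k0 \<noteq> 1"
      then have "2 \<le> k0 \<and> k0 \<le> N - 1" using k0 by auto
      then have "class_G1 V E N" unfolding class_G1_def using cG s'(1) scn by blast
      then show False using nG1 by simp
    qed
    then have "state_cop_number V E N s' = 1" using scn by (simp add: one_enat_def)
    then obtain y where y: "nbhd V E v = {y}" using leaf[OF G N3 G3 s'(1,2)] s'(3) by auto
    have "pos s N \<in> nbhd V E v" using nbhd_sym[OF G] v by auto
    then have yv: "nbhd V E v = {pos s N}" using y by auto
    have "pos s N \<in> V" using \<open>pos s N \<in> nbhd V E v\<close> unfolding nbhd_def by auto
    then have "cops_win V E 1" using two_vertex_copwin[OF G v yv] by blast
    then have "cop_number V E \<le> 1" unfolding cop_number_def by (intro Least_le) simp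
    then show False using cG N3 unfolding class_G_def by simp
  qed
  show ?thesis using x part2 by auto
qed

end
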